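(* Suppose $f$ is $L_f$-smooth and $L_{\mathbf S}^{\max}<\infty$. Let $T\ge1$ and $0<\gamma\le 1/\big(L_f\sqrt{L_{\mathcal D}L_{\mathbf S}^{\max}T}\big)$, and let $(x^t)$ be generated by Double Sketched GD. Then $$\min_{0\le t<T}\mathbb E\|\nabla\tilde f(x^t)\|^2\le\frac{3(\tilde f(x^0)-\tilde f^{\inf})}{\gamma T}+\gamma L_f^2L_{\mathcal D}L_{\mathbf S}^{\max}\big(\tilde f^{\inf}-f^{\inf}\big).$$
   Context: Let $f:\mathbb R^d\to\mathbb R$, fix $s\in\mathbb R^d$, and let $\mathcal D$ be a distribution of random matrices $\mathbf S\in\mathbb R^{d\times d}$ with $\mathbb E[\mathbf S]=I$ and $\mathbb E[\mathbf S^\top\mathbf S]$ finite. Define $f_{\mathbf S}(x)=f(s+\mathbf S(x-s))$, $\tilde f(x)=\mathbb E_{\mathbf S\sim\mathcal D}[f_{\mathbf S}(x)]$, $\tilde f^{\inf}=\inf_x\tilde f(x)$, $L_{\mathcal D}=\lambda_{\max}(\mathbb E[\mathbf S^\top\mathbf S])$, and $L_{\mathbf S}^{\max}$ the smallest constant with $\lambda_{\max}(\mathbf S^\top\mathbf S)\le L_{\mathbf S}^{\max}$ a.s. Double Sketched GD: given $x^0$, for $t\ge0$ draw $\mathbf S^t\sim\mathcal D$ independently of the past and set $x^{t+1}=x^t-\gamma(\mathbf S^t)^\top\nabla f(s+\mathbf S^t(x^t-s))$. $f$ is $L_f$-smooth if differentiable, $f(x+h)\le f(x)+\langle\nabla f(x),h\rangle+\frac{L_f}{2}\|h\|^2$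 for all $x,h$, and bounded below by $f^{\inf}\in\mathbb R$. *)

theory Defs
  imports "HOL-Analysis.Analysis" "HOL-Probability.Probability"
begin

type_synonym 'n vect = "real ^ 'n"
type_synonym 'n matr = "real ^ 'n ^ 'n"

definition grad :: "('n::finite vect \<Rightarrow> real) \<Rightarrow> 'n vect \<Rightarrow> 'n vect" where
  "grad F x = (THE D. GDERIV F x :> D)"

definition L_smooth :: "real \<Rightarrow> ('n::finite vect \<Rightarrow> real) \<Rightarrow> bool" where
  "L_smooth L F \<longleftrightarrow> (\<forall>x. F differentiable (at x)) \<and>
     (\<forall>x h. F (x + h) \<le> F x + grad F x \<bullet> h + L / 2 * (norm h)^2)"

definition lambda_max :: "'n::finite matr \<Rightarrow> real" where
  "lambda_max M = Max {c. \<exists>v. v \<noteq> 0 \<and> M *v v = c *\<^sub>R v}"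

definition f_S :: "('n::finite vect \<Rightarrow> real) \<Rightarrow> 'n vect \<Rightarrow> 'n matr \<Rightarrow> 'n vect \<Rightarrow> real" where
  "f_S f s S x = f (s + S *v (x - s))"

definition f_tilde :: "'n::finite matr measure \<Rightarrow> ('n vect \<Rightarrow> real) \<Rightarrow> 'n vect \<Rightarrow> 'n vect \<Rightarrow> real" where
  "f_tilde D f s x = (\<integral>S. f_S f s S x \<partial>D)"

definition L_D :: "'n::finite matr measure \<Rightarrow> real" where
  "L_D D = lambda_max (\<integral>S. transpose S ** S \<partial>D)"

definition L_S_max :: "'n::finite matr measure \<Rightarrow> real" where
  "L_S_max D = Inf {L. AE S in D. lambda_max (transpose S ** S) \<le> L}"

primrec dsgd :: "('n::finite vect \<Rightarrow> real) \<Rightarrow> 'n vect \<Rightarrow> real \<Rightarrow> 'n vect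
    \<Rightarrow> (nat \<Rightarrow> 'n matr) \<Rightarrow> nat \<Rightarrow> 'n vect" where
  "dsgd f s \<gamma> x0 \<omega> 0 = x0"
| "dsgd f s \<gamma> x0 \<omega> (Suc t) = dsgd f s \<gamma> x0 \<omega> t
     - \<gamma> *\<^sub>R (transpose (\<omega> t) *v grad f (s + \<omega> t *v (dsgd f s \<gamma> x0 \<omega> t - s)))"

end

theory Submission
  imports Defs
begin

lemma adj: "((A::real^'n^'m) *v x) \<bullet> y = x \<bullet> (transpose A *v y)"
  by (metis dot_lmul_matrix vector_transpose_matrix)

lemma sym_inner: assumes "transpose M = (M::real^'n^'n)"
  shows "x \<bullet> (M *v y) = (M *v x) \<bullet> y"
  using adj[of M x y] assms by (simp add: inner_commute)

lemma eig_orth: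
  assumes "transpose M = (M::real^'n^'n)" "M *v v = c *\<^sub>R v" "M *v w = d *\<^sub>R w" "c \<noteq> d"
  shows "v \<bullet> w = 0"
proof -
  have "c * (v \<bullet> w) = (M *v v) \<bullet> w" using assms by simp
  also have "\<dots> = v \<bullet> (M *v w)" using sym_inner[OF assms(1)] by simp
  also have "\<dots> = d * (v \<bullet> w)" using assms by simp
  finally show ?thesis using assms(4) by simp
qed

lemma eig_finite:
  assumes "transpose M = (M::real^'n::finite^'n)"
  shows "finite {c. \<exists>v. v \<noteq> 0 \<and> M *v v = c *\<^sub>R v}"
proof -
  let ?E = "{c. \<exists>v. v \<noteq> 0 \<and> M *v v = c *\<^sub>R v}"
  define g where "g c = (SOME v. v \<noteq> 0 \<and> M *v v = c *\<^sub>R v)" for c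
  have g: "g c \<noteq> 0 \<and> M *v g c = c *\<^sub>R g c" if "c \<in> ?E" for c
  proof -
    from that obtain v where "v \<noteq> 0 \<and> M *v v = c *\<^sub>R v" by auto
    then show ?thesis unfolding g_def by (rule someI)
  qed
  have inj: "inj_on g ?E"
  proof (rule inj_onI)
    fix c d assume c: "c \<in> ?E" and d: "d \<in> ?E" and eq: "g c = g d"
    have "c *\<^sub>R g c = d *\<^sub>R g c" using g[OF c] g[OF d] eq by metis
    then show "c = d" using g[OF c] scaleR_cancel_right by blast
  qed
  have "pairwise orthogonal (g ` ?E)"
    unfolding pairwise_def orthogonal_def
  proof (intro ballI impI)
    fix x y assume "x \<in> g ` ?E" "y \<in> g ` ?E" "x \<noteq> y"
    then obtain c d where c: "c \<in> ?E" "x = g c" and d: "d \<in> ?E" "y = g d" by blast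
    with \<open>x \<noteq> y\<close> have "c \<noteq> d" by blast
    then show "x \<bullet> y = 0" using g[OF c(1)] g[OF d(1)] eig_orth[OF assms, of "g c" c "g d" d] c d by simp
  qed
  moreover have "0 \<notin> g ` ?E" using g by (metis (no_types, lifting) imageE)
  ultimately have "independent (g ` ?E)" by (rule pairwise_orthogonal_independent)
  then have "finite (g ` ?E)" by (rule finiteI_independent)
  then show ?thesis using inj finite_imageD by blast
qed

lemma qscale: "(a *\<^sub>R h) \<bullet> ((M::real^'n^'n) *v (a *\<^sub>R h)) = a^2 * (h \<bullet> (M *v h))"
  by (simp add: matrix_vector_mult_scaleR power2_eq_square)

lemma rayleigh_exists:
  assumes sym: "transpose M = (M::real^'n::finite^'n)"
  shows "\<exists>c v. v \<noteq> 0 \<and> M *v v = c *\<^sub>R v \<and> (\<forall>h. h \<bullet> (M *v h) \<le> c * (norm h)^2)"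
proof -
  let ?q = "\<lambda>h. h \<bullet> (M *v h)"
  have cont: "continuous_on (sphere 0 1) ?q"
  proof -
    have "linear ((*v) M)" by (rule matrix_vector_mul_linear)
    then have "continuous_on (sphere 0 1) ((*v) M)"
      by (simp add: linear_continuous_on linear_conv_bounded_linear)
    then show ?thesis by (intro continuous_intros)
  qed
  have ne: "sphere (0::real^'n) 1 \<noteq> {}"
    using vector_choose_size[of 1] by (auto simp: sphere_def dist_norm)
  obtain v where v: "v \<in> sphere 0 1" and vmax: "\<And>y. y \<in> sphere 0 1 \<Longrightarrow> ?q y \<le> ?q v"
    using continuous_attains_sup[OF compact_sphere ne cont] by blast
  define c where "c = ?q v"
  have nv: "norm v = 1" using v by (simp add: sphere_def dist_norm)
  have bound: "?q h \<le> c * (norm h)^2" for h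
  proof (cases "h = 0")
    case True then show ?thesis by simp
  next
    case False
    let ?u = "(1 / norm h) *\<^sub>R h"
    have "?u \<in> sphere 0 1" using False by (simp add: sphere_def dist_norm)
    then have "?q ?u \<le> c" using vmax c_def by blast
    then have "(1/norm h)^2 * ?q h \<le> c" by (simp only: qscale)
    then have "(norm h)^2 * ((1/norm h)^2 * ?q h) \<le> (norm h)^2 * c"
      by (intro mult_left_mono) auto
    then show ?thesis using False by (simp add: field_simps power2_eq_square)
  qed
  define w where "w = M *v v - c *\<^sub>R v"
  have wv: "w \<bullet> v = 0"
  proof -
    have vv: "v \<bullet> v = 1" using nv by (simp add: power2_norm_eq_inner[symmetric])
    have "w \<bullet> v = (M *v v) \<bullet> v - c * (v \<bullet> v)" by (simp add: w_def inner_diff_left)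
    also have "(M *v v) \<bullet> v = c" by (simp add: c_def inner_commute)
    finally show ?thesis using vv by simp
  qed
  have wMv: "w \<bullet> (M *v v) = (norm w)^2"
  proof -
    have "M *v v = w + c *\<^sub>R v" by (simp add: w_def)
    then show ?thesis using wv by (simp add: inner_add_right power2_norm_eq_inner)
  qed
  have key: "2 * (norm w)^2 \<le> t * (c * (norm w)^2 - ?q w)" if t: "t > 0" for t
  proof -
    have "?q (v + t *\<^sub>R w) = ?q v + t * (v \<bullet> (M *v w)) + t * (w \<bullet> (M *v v)) + t^2 * ?q w"
      by (simp add: matrix_vector_right_distrib matrix_vector_mult_scaleR inner_add_left
          inner_add_right algebra_simps power2_eq_square)
    also have "v \<bullet> (M *v w) = w \<bullet> (M *v v)"
      using sym_inner[OF sym, of v w] by (simp add: inner_commute)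
    finally have e1: "?q (v + t *\<^sub>R w) = c + 2 * t * (norm w)^2 + t^2 * ?q w"
      using wMv c_def by simp
    have "(norm (v + t *\<^sub>R w))^2 = (v + t *\<^sub>R w) \<bullet> (v + t *\<^sub>R w)"
      by (simp add: power2_norm_eq_inner)
    also have "\<dots> = v \<bullet> v + 2 * t * (w \<bullet> v) + t^2 * (w \<bullet> w)"
      by (simp add: inner_add_left inner_add_right inner_commute algebra_simps power2_eq_square)
    also have "\<dots> = 1 + t^2 * (norm w)^2"
      using nv wv by (simp add: power2_norm_eq_inner[symmetric])
    finally have "(norm (v + t *\<^sub>R w))^2 = 1 + t^2 * (norm w)^2" .
    with bound[of "v + t *\<^sub>R w"] e1
    have "c + 2 * t * (norm w)^2 + t^2 * ?q w \<le> c * (1 + t^2 * (norm w)^2)" by simp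
    then have "t * (2 * (norm w)^2) \<le> t * (t * (c * (norm w)^2 - ?q w))"
      by (simp add: algebra_simps power2_eq_square)
    then show ?thesis using t by simp
  qed
  have "w = 0"
  proof (rule ccontr)
    assume "w \<noteq> 0"
    then have wp: "(norm w)^2 > 0" by simp
    define K where "K = c * (norm w)^2 - ?q w"
    define t where "t = (norm w)^2 / (\<bar>K\<bar> + 1)"
    have tp: "t > 0" using wp by (simp add: t_def)
    have "2 * (norm w)^2 \<le> t * K" using key[OF tp] by (simp add: K_def)
    also have "t * K \<le> t * \<bar>K\<bar>" using tp by (intro mult_left_mono) auto
    also have "t * \<bar>K\<bar> \<le> (norm w)^2"
      unfolding t_def using wp by (simp add: field_simps)
    finally show False using wp by simp
  qed
  then have "M *v v = c *\<^sub>R v" by (simp add: w_def)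
  moreover have "v \<noteq> 0" using nv by auto
  ultimately show ?thesis using bound by blast
qed

lemma rayleigh:
  assumes sym: "transpose M = (M::real^'n::finite^'n)"
  shows "h \<bullet> (M *v h) \<le> lambda_max M * (norm h)^2"
proof -
  obtain c v where cv: "v \<noteq> 0" "M *v v = c *\<^sub>R v" and b: "\<And>h. h \<bullet> (M *v h) \<le> c * (norm h)^2"
    using rayleigh_exists[OF sym] by blast
  have "c \<le> lambda_max M" unfolding lambda_max_def
    by (rule Max_ge[OF eig_finite[OF sym]]) (use cv in blast)
  then have "c * (norm h)^2 \<le> lambda_max M * (norm h)^2" by (intro mult_right_mono) auto
  with b[of h] show ?thesis by linarith
qed


lemma grad_works:
  assumes "F differentiable (at x)"
  shows "(F has_derivative (\<lambda>h. grad F x \<bullet> h)) (at x)"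
proof -
  obtain F' where F': "(F has_derivative F') (at x)"
    using assms by (auto simp: differentiable_def)
  have lin: "linear F'" using F' has_derivative_linear by blast
  define v where "v = adjoint F' 1"
  have "F' h = h \<bullet> v" for h using adjoint_works[OF lin, of h 1] by (simp add: v_def)
  then have "F' = (\<lambda>h. h \<bullet> v)" by (rule ext)
  then have Fv: "GDERIV F x :> v" using F' by (simp add: gderiv_def)
  have uniq: "D = v" if "GDERIV F x :> D" for D
  proof -
    have "(\<lambda>h. h \<bullet> D) = (\<lambda>h. h \<bullet> v)"
      using has_derivative_unique[of F "\<lambda>h. h \<bullet> D" x "\<lambda>h. h \<bullet> v"] that Fv
      by (simp add: gderiv_def)
    then have "(D - v) \<bullet> D = (D - v) \<bullet> v" by metis
    then have "(D - v) \<bullet> (D - v) = 0" by (simp add: inner_diff_right)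
    then show ?thesis by simp
  qed
  have "grad F x = v" unfolding grad_def using Fv uniq by blast
  then show ?thesis using Fv by (simp add: gderiv_def inner_commute)
qed

lemma t2: "(\<lambda>n::nat. 1 / (real n + 1)) \<longlonglongrightarrow> 0"
  using LIMSEQ_inverse_real_of_nat by (simp add: inverse_eq_divide add.commute)

lemma t4: fixes g :: "real \<Rightarrow> real"
  assumes "(g \<longlongrightarrow> L) (at 0)"
  shows "(\<lambda>n::nat. g (1 / (real n + 1))) \<longlonglongrightarrow> L"
proof -
  have "\<And>i. (\<lambda>n::nat. 1 / (real n + 1)) i \<in> UNIV - {0}" by simp
  from tendsto_at_iff_sequentially[THEN iffD1, OF assms, rule_format, OF this t2]
  show ?thesis by (simp add: comp_def)
qed

lemma diff_cont: fixes F :: "real^'n::finite \<Rightarrow> real"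
  assumes diff: "\<And>x. F differentiable (at x)"
  shows "continuous_on UNIV F"
  using diff continuous_at_imp_continuous_on differentiable_imp_continuous_within by blast

lemma dir_deriv:
  fixes F :: "real^'n::finite \<Rightarrow> real"
  assumes "F differentiable (at x)"
  shows "((\<lambda>t. (F (x + t *\<^sub>R b) - F x) / t) \<longlongrightarrow> grad F x \<bullet> b) (at 0)"
proof -
  have g: "(F has_derivative (\<lambda>h. grad F x \<bullet> h)) (at (x + 0 *\<^sub>R b))"
    using grad_works[OF assms] by simp
  have p: "((\<lambda>t. x + t *\<^sub>R b) has_derivative (\<lambda>t. t *\<^sub>R b)) (at 0)"
    by (auto intro!: derivative_eq_intros)
  have "((\<lambda>t. F (x + t *\<^sub>R b)) has_derivative (\<lambda>t. grad F x \<bullet> (t *\<^sub>R b))) (at 0)"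
    using has_derivative_compose[OF p g] by (simp add: comp_def)
  then have "((\<lambda>t. F (x + t *\<^sub>R b)) has_real_derivative (grad F x \<bullet> b)) (at 0)"
  proof -
    have "(\<lambda>t. grad F x \<bullet> (t *\<^sub>R b)) = (*) (grad F x \<bullet> b)"
      by (rule ext) (simp add: mult.commute)
    then show ?thesis using \<open>((\<lambda>t. F (x + t *\<^sub>R b)) has_derivative _) _\<close>
      unfolding has_field_derivative_def by simp
  qed
  then show ?thesis by (simp add: DERIV_def)
qed

lemma grad_measurable:
  fixes F :: "real^'n::finite \<Rightarrow> real"
  assumes diff: "\<And>x. F differentiable (at x)"
  shows "grad F \<in> borel_measurable borel"
proof -
  have cont: "continuous_on UNIV F" by (rule diff_cont[OF diff])
  show ?thesis
  proof (rule borel_measurable_euclidean_space[THEN iffD2], rule ballI)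
    fix b :: "real^'n" assume b: "b \<in> Basis"
    show "(\<lambda>x. grad F x \<bullet> b) \<in> borel_measurable borel"
    proof (rule borel_measurable_LIMSEQ_real[where u="\<lambda>n x. (F (x + (1 / (real n + 1)) *\<^sub>R b) - F x) / (1 / (real n + 1))"])
      fix x show "(\<lambda>n. (F (x + (1 / (real n + 1)) *\<^sub>R b) - F x) / (1 / (real n + 1))) \<longlonglongrightarrow> grad F x \<bullet> b"
        using t4[OF dir_deriv[OF diff, of x b]] by simp
    next
      fix n :: nat
      let ?c = "1 / (real n + 1)"
      have c1: "continuous_on UNIV (\<lambda>x::real^'n. x + ?c *\<^sub>R b)"
        by (intro continuous_on_add continuous_on_id continuous_on_const)
      have "continuous_on UNIV (F \<circ> (\<lambda>x. x + ?c *\<^sub>R b))"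
        by (rule continuous_on_compose[OF c1 continuous_on_subset[OF cont]]) simp
      then have c2: "continuous_on UNIV (\<lambda>x. F (x + ?c *\<^sub>R b))" by (simp add: comp_def)
      have "continuous_on UNIV (\<lambda>x. (F (x + ?c *\<^sub>R b) - F x) / ?c)"
        by (rule continuous_on_divide[OF continuous_on_diff[OF c2 cont] continuous_on_const]) simp
      then show "(\<lambda>x. (F (x + ?c *\<^sub>R b) - F x) / ?c) \<in> borel_measurable borel"
        by (rule borel_measurable_continuous_onI)
    qed
  qed
qed


declare transpose_matrix_vector[simp del] vector_transpose_matrix[simp del]

lemma cont_mv: "continuous_on UNIV (\<lambda>p::(real^'n::finite^'m::finite) \<times> (real^'n). fst p *v snd p)"
  unfolding matrix_vector_mult_def
  by (intro continuous_on_vec_lambda continuous_on_sum continuous_on_mult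
      bounded_linear.continuous_on[OF bounded_linear_vec_nth] continuous_on_fst continuous_on_snd
      continuous_on_id)

lemma cont_tmv: "continuous_on UNIV (\<lambda>p::(real^'n::finite^'m::finite) \<times> (real^'m). transpose (fst p) *v snd p)"
  unfolding matrix_vector_mult_def transpose_def
  by (intro continuous_on_vec_lambda continuous_on_sum continuous_on_mult
      bounded_linear.continuous_on[OF bounded_linear_vec_nth] continuous_on_fst continuous_on_snd
      continuous_on_id)

lemma Sv_sq: "(norm ((S::real^'n::finite^'n) *v v))^2 = v \<bullet> ((transpose S ** S) *v v)"
  by (simp add: power2_norm_eq_inner adj matrix_vector_mul_assoc[symmetric])

lemma sym_StS: "transpose (transpose S ** S) = transpose (S::real^'n::finite^'n) ** S"
  by (simp add: matrix_transpose_mul)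

lemma Snorm: "(norm ((S::real^'n::finite^'n) *v v))^2 \<le> lambda_max (transpose S ** S) * (norm v)^2"
  unfolding Sv_sq by (rule rayleigh[OF sym_StS])

lemma lmax_nonneg: "0 \<le> lambda_max (transpose (S::real^'n::finite^'n) ** S)"
proof -
  obtain v :: "real^'n" where v: "norm v = 1" using vector_choose_size[of 1] by auto
  have "0 \<le> (norm (S *v v))^2" by simp
  also have "\<dots> \<le> lambda_max (transpose S ** S) * (norm v)^2" by (rule Snorm)
  finally show ?thesis using v by simp
qed

lemma transpose_bound:
  assumes "\<And>v. norm ((S::real^'n::finite^'n) *v v) \<le> K * norm v"
  shows "norm (transpose S *v v) \<le> K * norm v"
proof -
  let ?u = "transpose S *v v"
  have "(norm ?u)^2 = v \<bullet> (S *v ?u)"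
    by (simp add: power2_norm_eq_inner adj[of "transpose S"])
  also have "\<dots> \<le> norm v * norm (S *v ?u)" by (rule norm_cauchy_schwarz)
  also have "\<dots> \<le> norm v * (K * norm ?u)" by (intro mult_left_mono assms) auto
  finally have *: "norm ?u * norm ?u \<le> (K * norm v) * norm ?u"
    by (simp add: power2_eq_square algebra_simps)
  show ?thesis
  proof (cases "norm ?u = 0")
    case True
    have "0 \<le> K * norm v"
    proof -
      obtain w :: "real^'n" where w: "norm w = 1" using vector_choose_size[of 1] by auto
      have "0 \<le> K * norm w" using assms[of w] norm_ge_zero order_trans by blast
      then have "0 \<le> K" using w by simp
      then show ?thesis by simp
    qed
    then show ?thesis using True by simp
  next
    case False
    then show ?thesis using * by (simp add: mult_le_cancel_right)
  qed
qed


locale dset =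
  fixes f :: "real^'n::finite \<Rightarrow> real" and s :: "real^'n" and D :: "(real^'n^'n) measure"
    and Lf :: real
  assumes D_prob: "prob_space D" and D_sets: "sets D = sets borel"
    and smooth: "L_smooth Lf f" and bdd: "bdd_below (range f)"
    and Lmax_fin: "\<exists>L. AE S in D. lambda_max (transpose S ** S) \<le> L"
    and ESS_int: "integrable D (\<lambda>S. transpose S ** S)"
    and Lf_pos: "Lf > 0"
begin

sublocale P: prob_space D by (rule D_prob)

definition "finf = Inf (range f)"
definition "Lm = L_S_max D"
definition "LD = L_D D"
definition "g = grad f"

lemma diff: "f differentiable (at x)" using smooth unfolding L_smooth_def by blast
lemma quad: "f (x + h) \<le> f x + g x \<bullet> h + Lf / 2 * (norm h)^2"
  using smooth unfolding L_smooth_def g_def by blast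
lemma fge: "finf \<le> f x" unfolding finf_def using bdd by (simp add: cInf_lower)
lemma f_cont: "continuous_on UNIV f" by (rule diff_cont[OF diff])
lemma f_meas: "f \<in> borel_measurable borel" by (rule borel_measurable_continuous_onI[OF f_cont])
lemma g_meas: "g \<in> borel_measurable borel" unfolding g_def by (rule grad_measurable[OF diff])
lemma f_deriv: "(f has_derivative (\<lambda>h. g x \<bullet> h)) (at x)"
  unfolding g_def by (rule grad_works[OF diff])

lemma gbound: "(norm (g x))^2 \<le> 2 * Lf * (f x - finf)"
proof -
  let ?h = "(- 1 / Lf) *\<^sub>R g x"
  have "finf \<le> f (x + ?h)" by (rule fge)
  also have "\<dots> \<le> f x + g x \<bullet> ?h + Lf / 2 * (norm ?h)^2" by (rule quad)
  also have "g x \<bullet> ?h = -((norm (g x))^2 / Lf)" by (simp add: power2_norm_eq_inner)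
  also have "(norm ?h)^2 = (norm (g x))^2 / Lf^2"
    using Lf_pos by (simp add: power_divide)
  finally have "finf \<le> f x - (norm (g x))^2 / Lf + Lf / 2 * ((norm (g x))^2 / Lf^2)" by simp
  also have "Lf / 2 * ((norm (g x))^2 / Lf^2) = (norm (g x))^2 / (2 * Lf)"
    using Lf_pos by (simp add: power2_eq_square field_simps)
  finally have "(norm (g x))^2 / (2 * Lf) \<le> f x - finf"
    using Lf_pos by (simp add: field_simps)
  then show ?thesis using Lf_pos by (simp add: field_simps)
qed

lemma measD: "measurable D M = measurable borel M"
  by (rule measurable_cong_sets[OF D_sets refl])

lemma Lm_ae: "AE S in D. lambda_max (transpose S ** S) \<le> Lm"
proof -
  let ?A = "{L. AE S in D. lambda_max (transpose S ** S) \<le> L}"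
  have ne: "?A \<noteq> {}" using Lmax_fin by auto
  have lb: "0 \<le> L" if "L \<in> ?A" for L
  proof -
    from that have "AE S in D. lambda_max (transpose S ** S) \<le> L" by simp
    then have "AE S in D. 0 \<le> L"
      by eventually_elim (use lmax_nonneg order_trans in blast)
    then show ?thesis by simp
  qed
  have bdd': "bdd_below ?A" by (rule bdd_belowI[where m=0]) (rule lb)
  have Lm_eq: "Lm = Inf ?A" by (simp add: Lm_def L_S_max_def)
  have "AE S in D. \<forall>n::nat. lambda_max (transpose S ** S) \<le> Lm + 1 / (real n + 1)"
  proof (subst AE_all_countable, rule allI)
    fix n :: nat
    have "Inf ?A < Lm + 1 / (real n + 1)" using Lm_eq by (simp add: add_pos_pos)
    then obtain L where L: "L \<in> ?A" "L < Lm + 1 / (real n + 1)"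
      using cInf_lessD[OF ne] by blast
    from L(1) show "AE S in D. lambda_max (transpose S ** S) \<le> Lm + 1 / (real n + 1)"
      by (simp add: eventually_mono[where P="\<lambda>S. lambda_max (transpose S ** S) \<le> L"] L(2) order_trans less_imp_le)
  qed
  then show ?thesis
  proof eventually_elim
    fix S assume H: "\<forall>n::nat. lambda_max (transpose S ** S) \<le> Lm + 1 / (real n + 1)"
    show "lambda_max (transpose S ** S) \<le> Lm"
    proof (rule ccontr)
      assume "\<not> ?thesis"
      then have pos: "lambda_max (transpose S ** S) - Lm > 0" by simp
      obtain n :: nat where "inverse (real (Suc n)) < lambda_max (transpose S ** S) - Lm"
        using reals_Archimedean[OF pos] by blast
      then have "1 / (real n + 1) < lambda_max (transpose S ** S) - Lm"
        by (simp add: inverse_eq_divide add.commute)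
      with H[rule_format, of n] show False by simp
    qed
  qed
qed

lemma Lm_nonneg: "0 \<le> Lm"
proof -
  have "AE S in D. 0 \<le> Lm" using Lm_ae by eventually_elim (use lmax_nonneg order_trans in blast)
  then show ?thesis by simp
qed

lemma S_ae: "AE S in D. \<forall>v. norm (S *v v) \<le> sqrt Lm * norm v \<and> norm (transpose S *v v) \<le> sqrt Lm * norm v"
  using Lm_ae
proof eventually_elim
  fix S :: "real^'n^'n" assume L: "lambda_max (transpose S ** S) \<le> Lm"
  have b: "norm (S *v v) \<le> sqrt Lm * norm v" for v
  proof -
    have "(norm (S *v v))^2 \<le> Lm * (norm v)^2"
      using Snorm[of S v] L by (meson mult_right_mono order_trans zero_le_power2)
    then have "sqrt ((norm (S *v v))^2) \<le> sqrt (Lm * (norm v)^2)" by (rule real_sqrt_le_mono)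
    then show ?thesis by (simp add: real_sqrt_mult)
  qed
  then show "\<forall>v. norm (S *v v) \<le> sqrt Lm * norm v \<and> norm (transpose S *v v) \<le> sqrt Lm * norm v"
    using transpose_bound[of S "sqrt Lm"] by blast
qed

end


context dset begin

definition "z S y = s + S *v (y - s)"
definition "gS S y = transpose S *v g (z S y)"
definition "ft = f_tilde D f s"
definition "G y = (\<integral>S. gS S y \<partial>D)"
definition "Bnd R = f s + norm (g s) * (sqrt Lm * R) + Lf / 2 * (Lm * R^2)"

lemma ft_eq: "ft y = (\<integral>S. f (z S y) \<partial>D)"
  by (simp add: ft_def f_tilde_def f_S_def z_def)

lemma cont_Sw: "continuous_on UNIV (\<lambda>S::real^'n^'n. S *v w)"
  by (rule continuous_on_compose2[OF cont_mv, of UNIV "\<lambda>S. (S, w)", simplified])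
     (intro continuous_intros)

lemma cont_z: "continuous_on UNIV (\<lambda>S. z S y)"
  unfolding z_def by (intro continuous_intros cont_Sw)

lemma meas_fz[measurable]: "(\<lambda>S. f (z S y)) \<in> borel_measurable D"
  unfolding measD
  by (rule borel_measurable_continuous_onI, rule continuous_on_compose2[OF f_cont cont_z]) auto

lemma meas_gz: "(\<lambda>S. g (z S y)) \<in> borel_measurable D"
  unfolding measD
  by (rule measurable_compose[OF borel_measurable_continuous_onI[OF cont_z] g_meas])

lemma meas_gS[measurable]: "(\<lambda>S. gS S y) \<in> borel_measurable D"
  unfolding gS_def
  by (rule borel_measurable_continuous_Pair[OF _ meas_gz, where H="\<lambda>A v. transpose A *v v"])
     (auto simp: measD intro: borel_measurable_continuous_onI[OF continuous_on_id] cont_tmv)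

lemma meas_Sh: "(\<lambda>S. (norm (S *v h))^2) \<in> borel_measurable D"
  unfolding measD
  by (intro borel_measurable_continuous_onI continuous_intros cont_Sw)

lemma bounds:
  assumes R: "norm (y - s) \<le> R"
  shows "AE S in D. finf \<le> f (z S y) \<and> f (z S y) \<le> Bnd R \<and>
                    (norm (gS S y))^2 \<le> 2 * Lf * Lm * (Bnd R - finf)"
  using S_ae
proof eventually_elim
  fix S :: "real^'n^'n"
  assume H: "\<forall>v. norm (S *v v) \<le> sqrt Lm * norm v \<and> norm (transpose S *v v) \<le> sqrt Lm * norm v"
  let ?w = "S *v (y - s)"
  have sL: "0 \<le> sqrt Lm" using Lm_nonneg by simp
  have w: "norm ?w \<le> sqrt Lm * R"
    using H R sL by (meson mult_left_mono order_trans)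
  have w2: "(norm ?w)^2 \<le> Lm * R^2"
  proof -
    have "(norm ?w)^2 \<le> (sqrt Lm * R)^2" using w by (intro power_mono) auto
    then show ?thesis using Lm_nonneg by (simp add: power_mult_distrib)
  qed
  have "f (z S y) \<le> f s + g s \<bullet> ?w + Lf / 2 * (norm ?w)^2"
    unfolding z_def by (rule quad)
  also have "g s \<bullet> ?w \<le> norm (g s) * (sqrt Lm * R)"
    using norm_cauchy_schwarz[of "g s" ?w] w by (meson mult_left_mono norm_ge_zero order_trans)
  also have "Lf / 2 * (norm ?w)^2 \<le> Lf / 2 * (Lm * R^2)"
    using w2 Lf_pos by (intro mult_left_mono) auto
  finally have up: "f (z S y) \<le> Bnd R" by (simp add: Bnd_def)
  have "(norm (gS S y))^2 \<le> (sqrt Lm * norm (g (z S y)))^2"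
    unfolding gS_def using H by (intro power_mono) auto
  also have "\<dots> = Lm * (norm (g (z S y)))^2" using Lm_nonneg by (simp add: power_mult_distrib)
  also have "\<dots> \<le> Lm * (2 * Lf * (f (z S y) - finf))"
    using gbound Lm_nonneg by (intro mult_left_mono) auto
  also have "\<dots> \<le> Lm * (2 * Lf * (Bnd R - finf))"
    using up Lm_nonneg Lf_pos by (intro mult_left_mono) auto
  finally show "finf \<le> f (z S y) \<and> f (z S y) \<le> Bnd R \<and>
                    (norm (gS S y))^2 \<le> 2 * Lf * Lm * (Bnd R - finf)"
    using fge up by (simp add: algebra_simps)
qed

lemma int_fz: "integrable D (\<lambda>S. f (z S y))"
proof (rule P.integrable_const_bound[where B="\<bar>finf\<bar> + \<bar>Bnd (norm (y - s))\<bar>"])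
  show "AE S in D. norm (f (z S y)) \<le> \<bar>finf\<bar> + \<bar>Bnd (norm (y - s))\<bar>"
    using bounds[of y "norm (y - s)", OF order_refl] by eventually_elim auto
qed simp

lemma int_gS: "integrable D (\<lambda>S. gS S y)"
proof (rule P.integrable_const_bound[where B="sqrt (\<bar>2 * Lf * Lm * (Bnd (norm (y - s)) - finf)\<bar>)"])
  show "AE S in D. norm (gS S y) \<le> sqrt (\<bar>2 * Lf * Lm * (Bnd (norm (y - s)) - finf)\<bar>)"
    using bounds[of y "norm (y - s)", OF order_refl]
  proof eventually_elim
    case (elim S)
    then have "(norm (gS S y))^2 \<le> \<bar>2 * Lf * Lm * (Bnd (norm (y - s)) - finf)\<bar>" by linarith
    then show ?case by (metis real_le_rsqrt)
  qed
qed simp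

lemma int_gS2: "integrable D (\<lambda>S. (norm (gS S y))^2)"
proof (rule P.integrable_const_bound[where B="\<bar>2 * Lf * Lm * (Bnd (norm (y - s)) - finf)\<bar>"])
  show "AE S in D. norm ((norm (gS S y))^2) \<le> \<bar>2 * Lf * Lm * (Bnd (norm (y - s)) - finf)\<bar>"
    using bounds[of y "norm (y - s)", OF order_refl] by eventually_elim auto
qed simp

lemma int_Sh: "integrable D (\<lambda>S. (norm (S *v h))^2)"
proof (rule P.integrable_const_bound[where B="Lm * (norm h)^2"])
  show "AE S in D. norm ((norm (S *v h))^2) \<le> Lm * (norm h)^2"
    using S_ae
  proof eventually_elim
    case (elim S)
    then have "norm (S *v h) \<le> sqrt Lm * norm h" by blast
    then have "(norm (S *v h))^2 \<le> (sqrt Lm * norm h)^2" by (intro power_mono) auto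
    then show ?case using Lm_nonneg by (simp add: power_mult_distrib)
  qed
qed (rule meas_Sh)

lemma ft_ge: "finf \<le> ft y"
proof -
  have "(\<integral>S. finf \<partial>D) \<le> (\<integral>S. f (z S y) \<partial>D)"
    by (rule integral_mono) (auto intro: int_fz fge)
  then show ?thesis by (simp add: ft_eq P.prob_space)
qed

end


lemma blin_q: "bounded_linear (\<lambda>M::real^'n::finite^'n. h \<bullet> (M *v h))"
proof -
  have "linear (\<lambda>M::real^'n::finite^'n. h \<bullet> (M *v h))"
    by (rule linearI) (simp_all add: matrix_vector_mult_add_rdistrib inner_add_right
        scaleR_matrix_vector_assoc[symmetric])
  then show ?thesis by (simp add: linear_conv_bounded_linear)
qed

lemma blin_tr: "bounded_linear (transpose :: real^'n::finite^'n \<Rightarrow> real^'n^'n)"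
proof -
  have "linear (transpose :: real^'n::finite^'n \<Rightarrow> real^'n^'n)"
    by (rule linearI) (simp_all add: transpose_def vec_eq_iff transpose_scalar)
  then show ?thesis by (simp add: linear_conv_bounded_linear)
qed

context dset begin

definition "EM = (\<integral>S. transpose S ** S \<partial>D)"

lemma EM_sym: "transpose EM = EM"
proof -
  have "transpose EM = (\<integral>S. transpose (transpose S ** S) \<partial>D)"
    unfolding EM_def by (rule integral_bounded_linear[OF blin_tr ESS_int, symmetric])
  also have "\<dots> = EM" unfolding EM_def sym_StS ..
  finally show ?thesis .
qed

lemma ES_bound: "(\<integral>S. (norm (S *v h))^2 \<partial>D) \<le> LD * (norm h)^2"
proof -
  have "(\<integral>S. (norm (S *v h))^2 \<partial>D) = (\<integral>S. h \<bullet> ((transpose S ** S) *v h) \<partial>D)"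
    by (simp add: Sv_sq)
  also have "\<dots> = h \<bullet> (EM *v h)"
    unfolding EM_def by (rule integral_bounded_linear[OF blin_q ESS_int])
  also have "\<dots> \<le> lambda_max EM * (norm h)^2" by (rule rayleigh[OF EM_sym])
  finally show ?thesis by (simp add: LD_def L_D_def EM_def)
qed

lemma LD_nonneg: "0 \<le> LD"
proof -
  obtain v :: "real^'n" where v: "norm v = 1" using vector_choose_size[of 1] by auto
  have "0 \<le> (\<integral>S. (norm (S *v v))^2 \<partial>D)" by (rule Bochner_Integration.integral_nonneg) simp
  also have "\<dots> \<le> LD * (norm v)^2" by (rule ES_bound)
  finally show ?thesis using v by simp
qed

lemma z_add: "z S (y + h) = z S y + S *v h"
  by (simp add: z_def matrix_vector_right_distrib algebra_simps)

lemma point_quad: "f (z S (y + h)) \<le> f (z S y) + gS S y \<bullet> h + Lf / 2 * (norm (S *v h))^2"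
proof -
  have "f (z S (y + h)) \<le> f (z S y) + g (z S y) \<bullet> (S *v h) + Lf / 2 * (norm (S *v h))^2"
    unfolding z_add by (rule quad)
  also have "g (z S y) \<bullet> (S *v h) = gS S y \<bullet> h"
    unfolding gS_def using adj[of S h "g (z S y)"] by (simp add: inner_commute)
  finally show ?thesis .
qed

lemma G_inner: "(\<integral>S. gS S y \<bullet> h \<partial>D) = G y \<bullet> h"
  unfolding G_def by (rule integral_inner_left) (rule int_gS)

lemma ft_quad: "ft (y + h) \<le> ft y + G y \<bullet> h + Lf * LD / 2 * (norm h)^2"
proof -
  have i1: "integrable D (\<lambda>S. gS S y \<bullet> h)" using int_gS by simp
  have i2: "integrable D (\<lambda>S. Lf / 2 * (norm (S *v h))^2)" using int_Sh by simp
  have "ft (y + h) \<le> (\<integral>S. f (z S y) + gS S y \<bullet> h + Lf / 2 * (norm (S *v h))^2 \<partial>D)"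
    unfolding ft_eq
  proof (rule integral_mono)
    show "integrable D (\<lambda>S. f (z S y) + gS S y \<bullet> h + Lf / 2 * (norm (S *v h))^2)"
      by (intro Bochner_Integration.integrable_add int_fz i1 i2)
  qed (auto simp only: int_fz point_quad)
  also have "\<dots> = ft y + G y \<bullet> h + Lf / 2 * (\<integral>S. (norm (S *v h))^2 \<partial>D)"
    using int_fz i1 i2 int_Sh by (simp add: ft_eq G_inner[symmetric])
  also have "Lf / 2 * (\<integral>S. (norm (S *v h))^2 \<partial>D) \<le> Lf / 2 * (LD * (norm h)^2)"
    using Lf_pos ES_bound by (intro mult_left_mono) auto
  finally show ?thesis by (simp add: algebra_simps)
qed

lemma EgS2: "(\<integral>S. (norm (gS S y))^2 \<partial>D) \<le> 2 * Lf * Lm * (ft y - finf)"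
proof -
  have "(\<integral>S. (norm (gS S y))^2 \<partial>D) \<le> (\<integral>S. 2 * Lf * Lm * (f (z S y) - finf) \<partial>D)"
  proof (rule integral_mono_AE)
    show "integrable D (\<lambda>S. 2 * Lf * Lm * (f (z S y) - finf))" using int_fz by simp
    show "AE S in D. (norm (gS S y))^2 \<le> 2 * Lf * Lm * (f (z S y) - finf)"
      using S_ae
    proof eventually_elim
      case (elim S)
      have "(norm (gS S y))^2 \<le> (sqrt Lm * norm (g (z S y)))^2"
        unfolding gS_def using elim by (intro power_mono) auto
      also have "\<dots> = Lm * (norm (g (z S y)))^2" using Lm_nonneg by (simp add: power_mult_distrib)
      also have "\<dots> \<le> Lm * (2 * Lf * (f (z S y) - finf))"
        using gbound Lm_nonneg by (intro mult_left_mono) auto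
      finally show ?case by (simp add: algebra_simps)
    qed
  qed (rule int_gS2)
  also have "\<dots> = 2 * Lf * Lm * (ft y - finf)"
    using int_fz by (simp add: ft_eq P.prob_space)
  finally show ?thesis .
qed

end


context dset begin

definition "rr S y h = (f (z S (y + h)) - f (z S y) - gS S y \<bullet> h) / norm h"

lemma fz_deriv: "((\<lambda>y'. f (z S y')) has_derivative (\<lambda>h. gS S y \<bullet> h)) (at y)"
proof -
  have zd: "((\<lambda>y'. z S y') has_derivative (\<lambda>h. S *v h)) (at y)"
    unfolding z_def
    by (auto intro!: derivative_eq_intros bounded_linear.has_derivative[OF matrix_vector_mul_bounded_linear]
        simp: matrix_vector_mult_diff_distrib)
  have "((\<lambda>y'. f (z S y')) has_derivative (\<lambda>h. g (z S y) \<bullet> (S *v h))) (at y)"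
    using has_derivative_compose[OF zd f_deriv] by (simp add: comp_def)
  moreover have "(\<lambda>h. g (z S y) \<bullet> (S *v h)) = (\<lambda>h. gS S y \<bullet> h)"
    by (rule ext) (simp add: gS_def adj[of S, symmetric] inner_commute)
  ultimately show ?thesis by simp
qed

lemma rr_lim: "((\<lambda>h. rr S y h) \<longlongrightarrow> 0) (at 0)"
proof -
  have "((\<lambda>h. norm (f (z S (y + h)) - f (z S y) - gS S y \<bullet> h) / norm h) \<longlongrightarrow> 0) (at 0)"
    using fz_deriv[of S y] unfolding has_derivative_at by blast
  then have "((\<lambda>h. \<bar>rr S y h\<bar>) \<longlongrightarrow> 0) (at 0)" by (simp add: rr_def)
  then show ?thesis by (simp only: tendsto_rabs_zero_iff)
qed

lemma meas_rr: "(\<lambda>S. rr S y h) \<in> borel_measurable D"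
  unfolding rr_def by measurable

lemma rr_bound:
  assumes h: "norm h \<le> B"
  shows "AE S in D. norm (rr S y h) \<le> 2 * sqrt \<bar>2 * Lf * Lm * (Bnd (norm (y - s) + B) - finf)\<bar> + Lf * Lm * B"
proof -
  let ?K = "sqrt \<bar>2 * Lf * Lm * (Bnd (norm (y - s) + B) - finf)\<bar>"
  have R1: "norm (y - s) \<le> norm (y - s) + B" using h norm_ge_zero order_trans by (meson le_add_same_cancel1)
  have R2: "norm (y + h - s) \<le> norm (y - s) + B"
  proof -
    have "norm (y + h - s) = norm ((y - s) + h)" by (simp add: algebra_simps)
    also have "\<dots> \<le> norm (y - s) + norm h" by (rule norm_triangle_ineq)
    finally show ?thesis using h by simp
  qed
  have gb: "norm (gS S y') \<le> ?K" if "(norm (gS S y'))^2 \<le> 2 * Lf * Lm * (Bnd (norm (y - s) + B) - finf)" for S y'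
    using that by (intro real_le_rsqrt) linarith
  show ?thesis
    using bounds[OF R1] bounds[OF R2] S_ae
  proof eventually_elim
    case (elim S)
    have g1: "norm (gS S y) \<le> ?K" using elim(1) gb by blast
    have g2: "norm (gS S (y + h)) \<le> ?K" using elim(2) gb by blast
    have Sh: "(norm (S *v h))^2 \<le> Lm * (norm h)^2"
    proof -
      have "norm (S *v h) \<le> sqrt Lm * norm h" using elim(3) by blast
      then have "(norm (S *v h))^2 \<le> (sqrt Lm * norm h)^2" by (intro power_mono) auto
      then show ?thesis using Lm_nonneg by (simp add: power_mult_distrib)
    qed
    let ?num = "f (z S (y + h)) - f (z S y) - gS S y \<bullet> h"
    have LS: "Lf / 2 * (norm (S *v h))^2 \<le> Lf / 2 * (Lm * (norm h)^2)"
      by (rule mult_left_mono[OF Sh]) (use Lf_pos in simp)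
    have up: "?num \<le> Lf / 2 * (Lm * (norm h)^2)"
      using point_quad[of S y h] LS by linarith
    have mh: "S *v (- h) = - (S *v h)" using matrix_vector_mult_diff_distrib[of S 0 h] by simp
    have lowq: "f (z S y) \<le> f (z S (y + h)) - gS S (y + h) \<bullet> h + Lf / 2 * (norm (S *v h))^2"
      using point_quad[of S "y + h" "- h"] by (simp add: mh)
    have ci1: "\<bar>gS S (y + h) \<bullet> h\<bar> \<le> ?K * norm h"
      using Cauchy_Schwarz_ineq2[of "gS S (y + h)" h] g2 by (meson mult_right_mono norm_ge_zero order_trans)
    have ci2: "\<bar>gS S y \<bullet> h\<bar> \<le> ?K * norm h"
      using Cauchy_Schwarz_ineq2[of "gS S y" h] g1 by (meson mult_right_mono norm_ge_zero order_trans)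
    have low: "- (2 * ?K * norm h) - Lf / 2 * (Lm * (norm h)^2) \<le> ?num"
      using lowq ci1 ci2 LS by (simp add: abs_le_iff)
    have Kh: "0 \<le> 2 * ?K * norm h" by simp
    have "\<bar>?num\<bar> \<le> 2 * ?K * norm h + Lf / 2 * (Lm * (norm h)^2)"
      unfolding abs_le_iff using up low Kh by linarith
    also have "\<dots> \<le> (2 * ?K + Lf * Lm * B) * norm h"
    proof -
      have "Lf / 2 * (Lm * (norm h)^2) \<le> Lf * Lm * B * norm h"
      proof -
        have "Lf / 2 * (Lm * (norm h)^2) = (Lf * Lm * norm h / 2) * norm h"
          by (simp add: power2_eq_square)
        also have "\<dots> \<le> (Lf * Lm * B) * norm h"
          using h Lf_pos Lm_nonneg order_trans[OF norm_ge_zero h]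
          by (intro mult_right_mono) (auto intro!: mult_left_mono simp: divide_le_eq)
        finally show ?thesis by simp
      qed
      then show ?thesis by (simp add: algebra_simps)
    qed
    finally have A: "\<bar>?num\<bar> \<le> (2 * ?K + Lf * Lm * B) * norm h" .
    show ?case
    proof (cases "h = 0")
      case True then show ?thesis using Lf_pos Lm_nonneg h by (simp add: rr_def)
    next
      case False
      then have "norm (rr S y h) = \<bar>?num\<bar> / norm h" by (simp add: rr_def)
      also have "\<dots> \<le> 2 * ?K + Lf * Lm * B" using A False by (simp add: divide_le_eq)
      finally show ?thesis .
    qed
  qed
qed

lemma int_rr_eq: "(\<integral>S. rr S y h \<partial>D) = (ft (y + h) - ft y - G y \<bullet> h) / norm h"
proof -
  have i1: "integrable D (\<lambda>S. gS S y \<bullet> h)" using int_gS by simp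
  have "(\<integral>S. rr S y h \<partial>D) = (\<integral>S. f (z S (y + h)) - f (z S y) - gS S y \<bullet> h \<partial>D) / norm h"
    unfolding rr_def by simp
  also have "(\<integral>S. f (z S (y + h)) - f (z S y) - gS S y \<bullet> h \<partial>D)
        = ft (y + h) - ft y - G y \<bullet> h"
    using int_fz i1 by (simp add: ft_eq G_inner[symmetric])
  finally show ?thesis .
qed

lemma ft_deriv: "(ft has_derivative (\<lambda>h. G y \<bullet> h)) (at y)"
proof -
  have Q: "((\<lambda>h. (ft (y + h) - ft y - G y \<bullet> h) / norm h) \<longlongrightarrow> 0) (at 0)"
  proof (subst tendsto_at_iff_sequentially, intro allI impI)
    fix X :: "nat \<Rightarrow> real^'n" assume X0: "\<forall>i. X i \<in> UNIV - {0}" and X: "X \<longlonglongrightarrow> 0"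
    obtain B where B: "B > 0" "\<And>i. norm (X i) \<le> B"
      using convergent_imp_Bseq[OF convergentI[OF X]] by (auto elim!: BseqE)
    let ?C = "2 * sqrt \<bar>2 * Lf * Lm * (Bnd (norm (y - s) + B) - finf)\<bar> + Lf * Lm * B"
    have "(\<lambda>i. \<integral>S. rr S y (X i) \<partial>D) \<longlonglongrightarrow> (\<integral>S. 0 \<partial>D)"
    proof (rule integral_dominated_convergence[where w="\<lambda>_. ?C"])
      show "(\<lambda>S. 0::real) \<in> borel_measurable D" by simp
      show "\<And>i. (\<lambda>S. rr S y (X i)) \<in> borel_measurable D" by (rule meas_rr)
      show "integrable D (\<lambda>_. ?C)" by simp
      show "AE S in D. (\<lambda>i. rr S y (X i)) \<longlonglongrightarrow> 0"
      proof (rule AE_I2)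
        fix S
        show "(\<lambda>i. rr S y (X i)) \<longlonglongrightarrow> 0"
          using tendsto_at_iff_sequentially[THEN iffD1, OF rr_lim[of S y], rule_format, OF _ X] X0
          by (simp add: comp_def)
      qed
      show "\<And>i. AE S in D. norm (rr S y (X i)) \<le> ?C" by (rule rr_bound[OF B(2)])
    qed
    then show "((\<lambda>h. (ft (y + h) - ft y - G y \<bullet> h) / norm h) \<circ> X) \<longlonglongrightarrow> 0"
      by (simp add: comp_def int_rr_eq)
  qed
  have "((\<lambda>h. norm (ft (y + h) - ft y - G y \<bullet> h) / norm h) \<longlongrightarrow> 0) (at 0)"
    using tendsto_rabs_zero_iff[THEN iffD2, OF Q] by simp
  then show ?thesis unfolding has_derivative_at by (simp add: bounded_linear_inner_right)
qed

lemma ft_diff: "ft differentiable (at y)"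
  using ft_deriv unfolding differentiable_def by blast

lemma grad_ft: "grad ft y = G y"
proof -
  have a: "(ft has_derivative (\<lambda>h. grad ft y \<bullet> h)) (at y)" by (rule grad_works[OF ft_diff])
  have "(\<lambda>h. grad ft y \<bullet> h) = (\<lambda>h. G y \<bullet> h)"
    by (rule has_derivative_unique[OF a ft_deriv])
  then have "grad ft y \<bullet> (grad ft y - G y) = G y \<bullet> (grad ft y - G y)"
    by (rule fun_cong[where x="grad ft y - G y"])
  then have "(grad ft y - G y) \<bullet> (grad ft y - G y) = 0" by (simp add: inner_diff_left)
  then show ?thesis by simp
qed

end


context dset begin

definition "tinf = Inf (range ft)"

lemma ft_bdd: "bdd_below (range ft)"
  by (rule bdd_belowI[where m=finf]) (auto intro: ft_ge)

lemma tinf_le: "tinf \<le> ft y" unfolding tinf_def by (rule cInf_lower[OF _ ft_bdd]) simp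

lemma finf_tinf: "finf \<le> tinf" unfolding tinf_def by (rule cInf_greatest) (auto intro: ft_ge)

lemma ft_cont: "continuous_on UNIV ft" by (rule diff_cont[OF ft_diff])

lemma ft_meas: "ft \<in> borel_measurable borel" by (rule borel_measurable_continuous_onI[OF ft_cont])

lemma G_eq: "G = grad ft" by (rule ext) (simp add: grad_ft)

lemma G_meas: "G \<in> borel_measurable borel" unfolding G_eq by (rule grad_measurable[OF ft_diff])

lemma one_step:
  assumes gam: "\<gamma> > 0"
  shows "(\<integral>\<^sup>+S. ennreal (ft (y - \<gamma> *\<^sub>R gS S y) - tinf) \<partial>D) + ennreal (\<gamma> * (norm (G y))^2)
     \<le> ennreal ((1 + \<gamma>^2 * (Lf * LD) * (Lf * Lm)) * (ft y - tinf) + \<gamma>^2 * (Lf * LD) * (Lf * Lm) * (tinf - finf))"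
proof -
  define R where "R S = ft y - tinf - \<gamma> * (G y \<bullet> gS S y) + Lf * LD / 2 * \<gamma>^2 * (norm (gS S y))^2" for S
  have pw: "ft (y - \<gamma> *\<^sub>R gS S y) - tinf \<le> R S" for S
  proof -
    have "ft (y + (- \<gamma> *\<^sub>R gS S y)) \<le> ft y + G y \<bullet> (- \<gamma> *\<^sub>R gS S y) + Lf * LD / 2 * (norm (- \<gamma> *\<^sub>R gS S y))^2"
      by (rule ft_quad)
    also have "(norm (- \<gamma> *\<^sub>R gS S y))^2 = \<gamma>^2 * (norm (gS S y))^2"
      using gam by (simp add: power_mult_distrib)
    finally show ?thesis by (simp add: R_def algebra_simps)
  qed
  have Rnn: "0 \<le> R S" for S using pw[of S] tinf_le[of "y - \<gamma> *\<^sub>R gS S y"] by linarith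
  have intR: "integrable D R"
    unfolding R_def using int_gS[of y] int_gS2[of y] by simp
  have "(\<integral>\<^sup>+S. ennreal (ft (y - \<gamma> *\<^sub>R gS S y) - tinf) \<partial>D) \<le> (\<integral>\<^sup>+S. ennreal (R S) \<partial>D)"
    by (rule nn_integral_mono) (rule ennreal_leI[OF pw])
  also have "\<dots> = ennreal (\<integral>S. R S \<partial>D)"
    by (rule nn_integral_eq_integral[OF intR]) (simp add: Rnn)
  also have "(\<integral>S. R S \<partial>D) = ft y - tinf - \<gamma> * (G y \<bullet> G y) + Lf * LD / 2 * \<gamma>^2 * (\<integral>S. (norm (gS S y))^2 \<partial>D)"
    unfolding R_def using int_gS[of y] int_gS2[of y] by (simp add: P.prob_space G_def)
  finally have A: "(\<integral>\<^sup>+S. ennreal (ft (y - \<gamma> *\<^sub>R gS S y) - tinf) \<partial>D)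
      \<le> ennreal (ft y - tinf - \<gamma> * (norm (G y))^2 + Lf * LD / 2 * \<gamma>^2 * (\<integral>S. (norm (gS S y))^2 \<partial>D))"
    by (simp add: power2_norm_eq_inner)
  have c0: "0 \<le> Lf * LD / 2 * \<gamma>^2" using Lf_pos LD_nonneg by simp
  have "Lf * LD / 2 * \<gamma>^2 * (\<integral>S. (norm (gS S y))^2 \<partial>D) \<le> Lf * LD / 2 * \<gamma>^2 * (2 * Lf * Lm * (ft y - finf))"
    by (rule mult_left_mono[OF EgS2 c0])
  also have "\<dots> = \<gamma>^2 * (Lf * LD) * (Lf * Lm) * ((ft y - tinf) + (tinf - finf))"
    by (simp add: algebra_simps)
  finally have B: "ft y - tinf - \<gamma> * (norm (G y))^2 + Lf * LD / 2 * \<gamma>^2 * (\<integral>S. (norm (gS S y))^2 \<partial>D) + \<gamma> * (norm (G y))^2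
     \<le> (1 + \<gamma>^2 * (Lf * LD) * (Lf * Lm)) * (ft y - tinf) + \<gamma>^2 * (Lf * LD) * (Lf * Lm) * (tinf - finf)"
    by (simp add: algebra_simps)
  have nn1: "0 \<le> ft y - tinf - \<gamma> * (norm (G y))^2 + Lf * LD / 2 * \<gamma>^2 * (\<integral>S. (norm (gS S y))^2 \<partial>D)"
  proof -
    have "0 \<le> (\<integral>S. R S \<partial>D)" by (rule Bochner_Integration.integral_nonneg) (simp add: Rnn)
    also have "(\<integral>S. R S \<partial>D) = ft y - tinf - \<gamma> * (norm (G y))^2 + Lf * LD / 2 * \<gamma>^2 * (\<integral>S. (norm (gS S y))^2 \<partial>D)"
      unfolding R_def using int_gS[of y] int_gS2[of y] by (simp add: P.prob_space G_def power2_norm_eq_inner)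
    finally show ?thesis .
  qed
  have nn2: "0 \<le> \<gamma> * (norm (G y))^2" using gam by simp
  have "(\<integral>\<^sup>+S. ennreal (ft (y - \<gamma> *\<^sub>R gS S y) - tinf) \<partial>D) + ennreal (\<gamma> * (norm (G y))^2)
     \<le> ennreal (ft y - tinf - \<gamma> * (norm (G y))^2 + Lf * LD / 2 * \<gamma>^2 * (\<integral>S. (norm (gS S y))^2 \<partial>D)) + ennreal (\<gamma> * (norm (G y))^2)"
    by (rule add_right_mono[OF A])
  also have "\<dots> = ennreal (ft y - tinf - \<gamma> * (norm (G y))^2 + Lf * LD / 2 * \<gamma>^2 * (\<integral>S. (norm (gS S y))^2 \<partial>D) + \<gamma> * (norm (G y))^2)"
    by (rule ennreal_plus[OF nn1 nn2, symmetric])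
  also have "\<dots> \<le> ennreal ((1 + \<gamma>^2 * (Lf * LD) * (Lf * Lm)) * (ft y - tinf) + \<gamma>^2 * (Lf * LD) * (Lf * Lm) * (tinf - finf))"
    by (rule ennreal_leI[OF B])
  finally show ?thesis .
qed

end


context dset begin

abbreviation "SS \<equiv> PiM (UNIV::nat set) (\<lambda>_. D)"

lemma seq: "sequence_space D"
  unfolding sequence_space_def by (rule product_prob_spaceI) (rule D_prob)

lemma SS_prob: "prob_space SS"
  by (rule prob_space_PiM) (rule D_prob)

lemma split_SS:
  assumes phi: "phi \<in> borel_measurable SS"
  shows "(\<integral>\<^sup>+\<omega>. phi \<omega> \<partial>SS) = (\<integral>\<^sup>+A. (\<integral>\<^sup>+\<omega>. phi (case_nat A \<omega>) \<partial>SS) \<partial>D)"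
proof -
  interpret Q: sequence_space D by (rule seq)
  have T: "(\<lambda>(A, \<omega>). case_nat A \<omega>) \<in> measurable (D \<Otimes>\<^sub>M SS) SS"
    by (simp add: split_beta')
  have sf: "sigma_finite_measure SS" using SS_prob by (rule prob_space_imp_sigma_finite)
  have "(\<integral>\<^sup>+\<omega>. phi \<omega> \<partial>SS) = (\<integral>\<^sup>+\<omega>. phi \<omega> \<partial>(distr (D \<Otimes>\<^sub>M SS) SS (\<lambda>(A, \<omega>). case_nat A \<omega>)))"
    using Q.PiM_iter by simp
  also have "\<dots> = (\<integral>\<^sup>+x. phi (case_nat (fst x) (snd x)) \<partial>(D \<Otimes>\<^sub>M SS))"
    by (subst nn_integral_distr[OF T]) (auto simp: phi split_beta')
  also have "\<dots> = (\<integral>\<^sup>+A. (\<integral>\<^sup>+\<omega>. phi (case_nat A \<omega>) \<partial>SS) \<partial>D)"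
  proof -
    have m: "(\<lambda>x. phi (case_nat (fst x) (snd x))) \<in> borel_measurable (D \<Otimes>\<^sub>M SS)"
      using measurable_compose[OF T phi] by (simp add: split_beta')
    show ?thesis using sigma_finite_measure.nn_integral_fst[OF sf m] by simp
  qed
  finally show ?thesis .
qed

end


context dset begin

lemma dsgd_Suc: "dsgd f s \<gamma> y \<omega> (Suc t) = dsgd f s \<gamma> y \<omega> t - \<gamma> *\<^sub>R gS (\<omega> t) (dsgd f s \<gamma> y \<omega> t)"
  by (simp add: gS_def z_def g_def)

lemma dsgd_shift: "dsgd f s \<gamma> y (case_nat A \<omega>) (Suc t) = dsgd f s \<gamma> (y - \<gamma> *\<^sub>R gS A y) \<omega> t"
proof (induction t)
  case 0 then show ?case by (simp add: gS_def z_def g_def)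
next
  case (Suc t)
  let ?y = "y - \<gamma> *\<^sub>R gS A y"
  have "dsgd f s \<gamma> y (case_nat A \<omega>) (Suc (Suc t)) = dsgd f s \<gamma> y (case_nat A \<omega>) (Suc t)
      - \<gamma> *\<^sub>R gS (\<omega> t) (dsgd f s \<gamma> y (case_nat A \<omega>) (Suc t))"
    by (simp only: dsgd_Suc nat.case)
  also have "\<dots> = dsgd f s \<gamma> ?y \<omega> t - \<gamma> *\<^sub>R gS (\<omega> t) (dsgd f s \<gamma> ?y \<omega> t)"
    by (simp only: Suc.IH)
  also have "\<dots> = dsgd f s \<gamma> ?y \<omega> (Suc t)" by (simp only: dsgd_Suc)
  finally show ?case .
qed

lemma gSj: "(\<lambda>p. gS (fst p) (snd p)) \<in> borel_measurable (borel :: ((real^'n^'n) \<times> (real^'n)) measure)"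
proof -
  have c: "continuous_on UNIV (\<lambda>p::(real^'n^'n) \<times> (real^'n). z (fst p) (snd p))"
  proof -
    have "continuous_on UNIV (\<lambda>p::(real^'n^'n) \<times> (real^'n). fst p *v (snd p - s))"
      by (rule continuous_on_compose2[OF cont_mv, of UNIV "\<lambda>p. (fst p, snd p - s)", simplified])
         (intro continuous_intros)
    then show ?thesis unfolding z_def by (intro continuous_intros)
  qed
  have m1: "(\<lambda>p::(real^'n^'n) \<times> (real^'n). g (z (fst p) (snd p))) \<in> borel_measurable borel"
    by (rule measurable_compose[OF borel_measurable_continuous_onI[OF c] g_meas])
  have m0: "fst \<in> borel_measurable (borel :: ((real^'n^'n) \<times> (real^'n)) measure)"
    using measurable_fst[of "borel::(real^'n^'n) measure" "borel::(real^'n) measure"]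
    by (simp add: borel_prod)
  show ?thesis unfolding gS_def
    by (rule borel_measurable_continuous_Pair[OF m0 m1, where H="\<lambda>A v. transpose A *v v"])
       (rule cont_tmv)
qed

lemma comp_meas: "(\<lambda>\<omega>. \<omega> t) \<in> borel_measurable SS"
proof -
  have "(\<lambda>\<omega>. \<omega> t) \<in> measurable SS D" by (rule measurable_component_singleton) simp
  then show ?thesis by (simp add: measurable_cong_sets[OF refl D_sets])
qed

lemma dsgd_meas: "(\<lambda>\<omega>. dsgd f s \<gamma> y \<omega> t) \<in> borel_measurable SS"
proof (induction t)
  case 0 then show ?case by simp
next
  case (Suc t)
  have p: "(\<lambda>\<omega>. (\<omega> t, dsgd f s \<gamma> y \<omega> t)) \<in> borel_measurable SS"
    using measurable_Pair[OF comp_meas Suc] by (simp add: borel_prod)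
  have "(\<lambda>\<omega>. gS (\<omega> t) (dsgd f s \<gamma> y \<omega> t)) \<in> borel_measurable SS"
    using measurable_compose[OF p gSj] by simp
  then show ?case unfolding dsgd_Suc using Suc by (intro borel_measurable_diff borel_measurable_scaleR) auto
qed

end


context dset begin

lemma nn_const_SS: "(\<integral>\<^sup>+\<omega>. c \<partial>SS) = c"
  by (simp add: prob_space.emeasure_space_1[OF SS_prob])

lemma nn_const_D: "(\<integral>\<^sup>+\<omega>. c \<partial>D) = c"
  by (simp add: P.emeasure_space_1)

lemma meas_G_dsgd: "(\<lambda>\<omega>. ennreal (c * (norm (G (dsgd f s \<gamma> y \<omega> t)))^2)) \<in> borel_measurable SS"
proof -
  have "(\<lambda>\<omega>. G (dsgd f s \<gamma> y \<omega> t)) \<in> borel_measurable SS"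
    by (rule measurable_compose[OF dsgd_meas G_meas])
  then show ?thesis by measurable
qed

lemma meas_ft_dsgd: "(\<lambda>\<omega>. ennreal (c * (ft (dsgd f s \<gamma> y \<omega> t) - tinf))) \<in> borel_measurable SS"
proof -
  have "(\<lambda>\<omega>. ft (dsgd f s \<gamma> y \<omega> t)) \<in> borel_measurable SS"
    by (rule measurable_compose[OF dsgd_meas ft_meas])
  then show ?thesis by measurable
qed

lemma meas_ft_step: "(\<lambda>A. ennreal (ft (y - \<gamma> *\<^sub>R gS A y) - tinf)) \<in> borel_measurable D"
proof -
  have "(\<lambda>A. y - \<gamma> *\<^sub>R gS A y) \<in> borel_measurable D" by measurable
  then have "(\<lambda>A. ft (y - \<gamma> *\<^sub>R gS A y)) \<in> borel_measurable D"
    by (rule measurable_compose[OF _ ft_meas])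
  then show ?thesis by measurable
qed

lemma main_ind:
  assumes gam: "\<gamma> > 0"
  defines "a \<equiv> \<gamma>^2 * (Lf * LD) * (Lf * Lm)"
  defines "r \<equiv> 1 / (1 + a)"
  shows "\<forall>y. (\<integral>\<^sup>+\<omega>. (\<Sum>t<T. ennreal (r^(Suc t) * \<gamma> * (norm (G (dsgd f s \<gamma> y \<omega> t)))^2))
              + ennreal (r^T * (ft (dsgd f s \<gamma> y \<omega> T) - tinf)) \<partial>SS)
     \<le> ennreal (ft y - tinf + a * (tinf - finf) * (\<Sum>t<T. r^(Suc t)))"
proof (induction T)
  case 0
  show ?case by (simp add: prob_space.emeasure_space_1[OF SS_prob])
next
  case (Suc T)
  have a0: "0 \<le> a" unfolding a_def using Lf_pos LD_nonneg Lm_nonneg by simp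
  have r0: "0 \<le> r" "0 < r" unfolding r_def using a0 by auto
  have ra: "r * (1 + a) = 1" unfolding r_def using a0 by simp
  have D0: "0 \<le> tinf - finf" using finf_tinf by simp
  define W where "W = (\<Sum>t<T. r^(Suc t))"
  have W0: "0 \<le> W" unfolding W_def using r0 by (simp add: sum_nonneg)
  have WS: "(\<Sum>t<Suc T. r^(Suc t)) = r + r * W"
    unfolding W_def sum.lessThan_Suc_shift by (simp add: sum_distrib_left)
  define LL where "LL T' y \<omega> = (\<Sum>t<T'. ennreal (r^(Suc t) * \<gamma> * (norm (G (dsgd f s \<gamma> y \<omega> t)))^2))
              + ennreal (r^T' * (ft (dsgd f s \<gamma> y \<omega> T') - tinf))" for T' y \<omega>
  have LLm: "LL T' y \<in> borel_measurable SS" for T' y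
    unfolding LL_def
    by (intro borel_measurable_add borel_measurable_sum meas_G_dsgd meas_ft_dsgd)
  have final: "\<forall>y. (\<integral>\<^sup>+\<omega>. LL (Suc T) y \<omega> \<partial>SS) \<le> ennreal (ft y - tinf + a * (tinf - finf) * (\<Sum>t<Suc T. r^(Suc t)))"
  proof
    fix y
    define c where "c = ennreal (r^(Suc 0) * \<gamma> * (norm (G y))^2)"
    have ident: "LL (Suc T) y (case_nat A \<omega>) = c + ennreal r * LL T (y - \<gamma> *\<^sub>R gS A y) \<omega>" for A \<omega>
    proof -
      let ?y = "y - \<gamma> *\<^sub>R gS A y"
      have e1: "ennreal (r^(Suc (Suc t)) * \<gamma> * (norm (G (dsgd f s \<gamma> ?y \<omega> t)))^2)
          = ennreal r * ennreal (r^(Suc t) * \<gamma> * (norm (G (dsgd f s \<gamma> ?y \<omega> t)))^2)" for t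
        using r0 gam by (simp add: ennreal_mult[symmetric] mult_ac)
      have e2: "ennreal (r^(Suc T) * (ft (dsgd f s \<gamma> ?y \<omega> T) - tinf))
          = ennreal r * ennreal (r^T * (ft (dsgd f s \<gamma> ?y \<omega> T) - tinf))"
        using r0 tinf_le by (simp add: ennreal_mult[symmetric] mult_ac)
      show ?thesis
        unfolding LL_def c_def sum.lessThan_Suc_shift dsgd_shift dsgd.simps(1)
        by (simp only: e1 e2 sum_distrib_left distrib_left add.assoc)
    qed
    have "(\<integral>\<^sup>+\<omega>. LL (Suc T) y \<omega> \<partial>SS) = (\<integral>\<^sup>+A. (\<integral>\<^sup>+\<omega>. LL (Suc T) y (case_nat A \<omega>) \<partial>SS) \<partial>D)"
      by (rule split_SS[OF LLm])
    also have "\<dots> = (\<integral>\<^sup>+A. c + ennreal r * (\<integral>\<^sup>+\<omega>. LL T (y - \<gamma> *\<^sub>R gS A y) \<omega> \<partial>SS) \<partial>D)"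
    proof -
      have inner: "(\<integral>\<^sup>+\<omega>. c + ennreal r * LL T y' \<omega> \<partial>SS) = c + ennreal r * (\<integral>\<^sup>+\<omega>. LL T y' \<omega> \<partial>SS)" for y'
      proof -
        have m2: "(\<lambda>\<omega>. ennreal r * LL T y' \<omega>) \<in> borel_measurable SS"
          using LLm[of T y'] by measurable
        have "(\<integral>\<^sup>+\<omega>. c + ennreal r * LL T y' \<omega> \<partial>SS) = (\<integral>\<^sup>+\<omega>. c \<partial>SS) + (\<integral>\<^sup>+\<omega>. ennreal r * LL T y' \<omega> \<partial>SS)"
          by (rule nn_integral_add[OF _ m2]) simp
        also have "\<dots> = c + ennreal r * (\<integral>\<^sup>+\<omega>. LL T y' \<omega> \<partial>SS)"
          by (simp only: nn_const_SS nn_integral_cmult[OF LLm])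
        finally show ?thesis .
      qed
      show ?thesis unfolding ident inner ..
    qed
    also have "\<dots> \<le> (\<integral>\<^sup>+A. c + ennreal r * ennreal (ft (y - \<gamma> *\<^sub>R gS A y) - tinf + a * (tinf - finf) * W) \<partial>D)"
    proof (rule nn_integral_mono, rule add_left_mono, rule mult_left_mono)
      fix A
      show "(\<integral>\<^sup>+\<omega>. LL T (y - \<gamma> *\<^sub>R gS A y) \<omega> \<partial>SS) \<le> ennreal (ft (y - \<gamma> *\<^sub>R gS A y) - tinf + a * (tinf - finf) * W)"
        using Suc.IH unfolding LL_def W_def by blast
    qed simp
    also have "\<dots> = (\<integral>\<^sup>+A. (c + ennreal r * ennreal (a * (tinf - finf) * W))
                  + ennreal r * ennreal (ft (y - \<gamma> *\<^sub>R gS A y) - tinf) \<partial>D)"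
    proof (rule nn_integral_cong)
      fix A
      have "ennreal (ft (y - \<gamma> *\<^sub>R gS A y) - tinf + a * (tinf - finf) * W)
          = ennreal (ft (y - \<gamma> *\<^sub>R gS A y) - tinf) + ennreal (a * (tinf - finf) * W)"
        by (rule ennreal_plus) (use tinf_le a0 D0 W0 in auto)
      then show "c + ennreal r * ennreal (ft (y - \<gamma> *\<^sub>R gS A y) - tinf + a * (tinf - finf) * W) =
         (c + ennreal r * ennreal (a * (tinf - finf) * W)) + ennreal r * ennreal (ft (y - \<gamma> *\<^sub>R gS A y) - tinf)"
        by (simp only: distrib_left add.assoc add.commute[of "ennreal r * ennreal (ft (y - \<gamma> *\<^sub>R gS A y) - tinf)"])
    qed
    also have "\<dots> = (c + ennreal r * ennreal (a * (tinf - finf) * W))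
                  + ennreal r * (\<integral>\<^sup>+A. ennreal (ft (y - \<gamma> *\<^sub>R gS A y) - tinf) \<partial>D)"
    proof -
      have m2: "(\<lambda>A. ennreal r * ennreal (ft (y - \<gamma> *\<^sub>R gS A y) - tinf)) \<in> borel_measurable D"
        using meas_ft_step[of y] by measurable
      have "(\<integral>\<^sup>+A. (c + ennreal r * ennreal (a * (tinf - finf) * W))
                  + ennreal r * ennreal (ft (y - \<gamma> *\<^sub>R gS A y) - tinf) \<partial>D)
        = (\<integral>\<^sup>+A. (c + ennreal r * ennreal (a * (tinf - finf) * W)) \<partial>D)
          + (\<integral>\<^sup>+A. ennreal r * ennreal (ft (y - \<gamma> *\<^sub>R gS A y) - tinf) \<partial>D)"
        by (rule nn_integral_add[OF _ m2]) simp
      then show ?thesis by (simp only: nn_const_D nn_integral_cmult[OF meas_ft_step])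
    qed
    also have "\<dots> = ennreal r * ((\<integral>\<^sup>+A. ennreal (ft (y - \<gamma> *\<^sub>R gS A y) - tinf) \<partial>D) + ennreal (\<gamma> * (norm (G y))^2))
                  + ennreal r * ennreal (a * (tinf - finf) * W)"
    proof -
      have cE: "c = ennreal r * ennreal (\<gamma> * (norm (G y))^2)"
        unfolding c_def using r0 gam by (simp add: ennreal_mult[symmetric] mult.assoc)
      show ?thesis unfolding cE distrib_left by (simp only: add_ac)
    qed
    also have "\<dots> \<le> ennreal r * ennreal ((1 + a) * (ft y - tinf) + a * (tinf - finf))
                  + ennreal r * ennreal (a * (tinf - finf) * W)"
    proof (rule add_right_mono, rule mult_left_mono)
      show "(\<integral>\<^sup>+A. ennreal (ft (y - \<gamma> *\<^sub>R gS A y) - tinf) \<partial>D) + ennreal (\<gamma> * (norm (G y))^2)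
          \<le> ennreal ((1 + a) * (ft y - tinf) + a * (tinf - finf))"
        unfolding a_def by (rule one_step[OF gam])
    qed simp
    also have "\<dots> = ennreal (r * ((1 + a) * (ft y - tinf) + a * (tinf - finf)) + r * (a * (tinf - finf) * W))"
    proof -
      have U0: "0 \<le> (1 + a) * (ft y - tinf) + a * (tinf - finf)"
        using a0 D0 tinf_le[of y] by simp
      have V0: "0 \<le> a * (tinf - finf) * W" using a0 D0 W0 by simp
      have "ennreal r * ennreal ((1 + a) * (ft y - tinf) + a * (tinf - finf))
                  + ennreal r * ennreal (a * (tinf - finf) * W)
          = ennreal (r * ((1 + a) * (ft y - tinf) + a * (tinf - finf))) + ennreal (r * (a * (tinf - finf) * W))"
        by (simp only: ennreal_mult[OF r0(1) U0] ennreal_mult[OF r0(1) V0])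
      also have "\<dots> = ennreal (r * ((1 + a) * (ft y - tinf) + a * (tinf - finf)) + r * (a * (tinf - finf) * W))"
        by (rule ennreal_plus[symmetric]) (use r0 U0 V0 in simp_all)
      finally show ?thesis .
    qed
    also have "ennreal (r * ((1 + a) * (ft y - tinf) + a * (tinf - finf)) + r * (a * (tinf - finf) * W))
        = ennreal (ft y - tinf + a * (tinf - finf) * (\<Sum>t<Suc T. r^(Suc t)))"
    proof -
      have e: "r * ((1 + a) * X) = X" for X using ra by (metis mult.assoc mult_1)
      have "r * ((1 + a) * (ft y - tinf) + a * (tinf - finf)) + r * (a * (tinf - finf) * W)
          = r * ((1 + a) * (ft y - tinf)) + (r * (a * (tinf - finf)) + r * (a * (tinf - finf) * W))"
        by (simp only: distrib_left add.assoc)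
      also have "\<dots> = ft y - tinf + a * (tinf - finf) * (r + r * W)"
        by (simp only: e) (simp add: algebra_simps)
      finally show ?thesis unfolding WS by (rule arg_cong[where f=ennreal])
    qed
    finally show "(\<integral>\<^sup>+\<omega>. LL (Suc T) y \<omega> \<partial>SS) \<le> ennreal (ft y - tinf + a * (tinf - finf) * (\<Sum>t<Suc T. r^(Suc t)))" .
  qed
  then show ?case unfolding LL_def .
qed

end


lemma ennreal_div_bound:
  assumes c: "c > 0" and le: "ennreal c * m \<le> ennreal d"
  shows "m \<le> ennreal (d / c)"
proof -
  have "m = ennreal (1 / c) * (ennreal c * m)"
    using c by (simp add: ennreal_mult[symmetric] mult.assoc[symmetric])
  also have "\<dots> \<le> ennreal (1 / c) * ennreal d" by (rule mult_left_mono[OF le]) simp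
  also have "\<dots> = ennreal (d / c)"
  proof (cases "d \<ge> 0")
    case True then show ?thesis using c by (simp add: ennreal_mult[symmetric])
  next
    case False
    then have "ennreal d = 0" "ennreal (d / c) = 0" using c by (simp_all add: ennreal_neg divide_nonpos_pos)
    then show ?thesis by simp
  qed
  finally show ?thesis .
qed

context dset begin

lemma final_bound:
  assumes gam: "\<gamma> > 0" and aT: "\<gamma>^2 * (Lf * LD) * (Lf * Lm) * real T \<le> 1" and T: "T \<ge> 1"
  shows "Min ((\<lambda>t. \<integral>\<^sup>+\<omega>. ennreal ((norm (G (dsgd f s \<gamma> x0 \<omega> t)))^2) \<partial>SS) ` {..<T})
     \<le> ennreal (3 * (ft x0 - tinf) / (\<gamma> * real T) + \<gamma> * Lf^2 * LD * Lm * (tinf - finf))"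
proof -
  define a where "a = \<gamma>^2 * (Lf * LD) * (Lf * Lm)"
  define r where "r = 1 / (1 + a)"
  define W where "W = (\<Sum>t<T. r^(Suc t))"
  define E where "E t = (\<integral>\<^sup>+\<omega>. ennreal ((norm (G (dsgd f s \<gamma> x0 \<omega> t)))^2) \<partial>SS)" for t
  define m where "m = Min (E ` {..<T})"
  have a0: "0 \<le> a" unfolding a_def using Lf_pos LD_nonneg Lm_nonneg by simp
  have r0: "0 < r" "r \<le> 1" unfolding r_def using a0 by auto
  have D0: "0 \<le> tinf - finf" using finf_tinf by simp
  have d0: "0 \<le> ft x0 - tinf" using tinf_le by simp
  have M: "(\<integral>\<^sup>+\<omega>. (\<Sum>t<T. ennreal (r^(Suc t) * \<gamma> * (norm (G (dsgd f s \<gamma> x0 \<omega> t)))^2))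
              + ennreal (r^T * (ft (dsgd f s \<gamma> x0 \<omega> T) - tinf)) \<partial>SS)
     \<le> ennreal (ft x0 - tinf + a * (tinf - finf) * W)"
    using main_ind[OF gam, of T] unfolding a_def r_def W_def by blast
  have S1: "(\<Sum>t<T. ennreal (r^(Suc t) * \<gamma>) * E t) \<le> ennreal (ft x0 - tinf + a * (tinf - finf) * W)"
  proof -
    have "(\<Sum>t<T. ennreal (r^(Suc t) * \<gamma>) * E t)
        = (\<Sum>t<T. \<integral>\<^sup>+\<omega>. ennreal (r^(Suc t) * \<gamma> * (norm (G (dsgd f s \<gamma> x0 \<omega> t)))^2) \<partial>SS)"
    proof (rule sum.cong[OF refl])
      fix t
      have mG: "(\<lambda>\<omega>. ennreal ((norm (G (dsgd f s \<gamma> x0 \<omega> t)))^2)) \<in> borel_measurable SS"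
        using meas_G_dsgd[of 1] by simp
      show "ennreal (r^(Suc t) * \<gamma>) * E t
          = (\<integral>\<^sup>+\<omega>. ennreal (r^(Suc t) * \<gamma> * (norm (G (dsgd f s \<gamma> x0 \<omega> t)))^2) \<partial>SS)"
        unfolding E_def nn_integral_cmult[OF mG, symmetric]
        using r0 gam by (intro nn_integral_cong) (simp add: ennreal_mult[symmetric])
    qed
    also have "\<dots> = (\<integral>\<^sup>+\<omega>. (\<Sum>t<T. ennreal (r^(Suc t) * \<gamma> * (norm (G (dsgd f s \<gamma> x0 \<omega> t)))^2)) \<partial>SS)"
      by (rule nn_integral_sum[symmetric]) (rule meas_G_dsgd)
    also have "\<dots> \<le> (\<integral>\<^sup>+\<omega>. (\<Sum>t<T. ennreal (r^(Suc t) * \<gamma> * (norm (G (dsgd f s \<gamma> x0 \<omega> t)))^2))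
              + ennreal (r^T * (ft (dsgd f s \<gamma> x0 \<omega> T) - tinf)) \<partial>SS)"
      by (rule nn_integral_mono) simp
    also have "\<dots> \<le> ennreal (ft x0 - tinf + a * (tinf - finf) * W)" by (rule M)
    finally show ?thesis .
  qed
  have fin: "finite (E ` {..<T})" by simp
  have mle: "m \<le> E t" if "t < T" for t unfolding m_def using that by (intro Min_le fin) auto
  have S3: "ennreal (\<gamma> * W) * m \<le> ennreal (ft x0 - tinf + a * (tinf - finf) * W)"
  proof -
    have "ennreal (\<gamma> * W) = (\<Sum>t<T. ennreal (r^(Suc t) * \<gamma>))"
      unfolding W_def sum_distrib_left
      by (subst sum_ennreal) (use r0 gam in \<open>auto simp: mult.commute\<close>)
    then have "ennreal (\<gamma> * W) * m = (\<Sum>t<T. ennreal (r^(Suc t) * \<gamma>) * m)"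
      by (simp add: sum_distrib_right)
    also have "\<dots> \<le> (\<Sum>t<T. ennreal (r^(Suc t) * \<gamma>) * E t)"
      by (intro sum_mono mult_left_mono mle) auto
    also have "\<dots> \<le> ennreal (ft x0 - tinf + a * (tinf - finf) * W)" by (rule S1)
    finally show ?thesis .
  qed
  have Wlow: "real T * r^T \<le> W"
  proof -
    have "(\<Sum>t<T. r^T) \<le> W" unfolding W_def
      by (intro sum_mono power_decreasing) (use r0 in auto)
    then show ?thesis by simp
  qed
  have pow3: "(1 + a)^T \<le> 3"
  proof -
    have "(1 + a)^T \<le> (exp a)^T" by (intro power_mono) (use a0 in auto)
    also have "\<dots> = exp (real T * a)" by (simp add: exp_of_nat_mult)
    also have "\<dots> \<le> exp 1" using aT unfolding a_def by (simp add: mult.commute)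
    also have "\<dots> \<le> 3" by (rule exp_le)
    finally show ?thesis .
  qed
  have rT: "r^T = 1 / (1 + a)^T" unfolding r_def by (simp add: power_divide)
  have Tpos: "real T > 0" using T by simp
  have W3: "real T \<le> 3 * W"
  proof -
    have "real T = real T * r^T * (1 + a)^T" unfolding rT using a0 by simp
    also have "\<dots> \<le> W * 3"
    proof -
      have "0 \<le> real T * r^T" using r0 by simp
      then have "0 \<le> W" using Wlow by linarith
      then show ?thesis using Wlow pow3 a0 r0 by (intro mult_mono) auto
    qed
    finally show ?thesis by simp
  qed
  have Wpos: "W > 0" using W3 Tpos by simp
  have m_le: "m \<le> ennreal ((ft x0 - tinf + a * (tinf - finf) * W) / (\<gamma> * W))"
    by (rule ennreal_div_bound[OF _ S3]) (use gam Wpos in simp)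
  also have "(ft x0 - tinf + a * (tinf - finf) * W) / (\<gamma> * W)
      = (ft x0 - tinf) / (\<gamma> * W) + \<gamma> * Lf^2 * LD * Lm * (tinf - finf)"
    using gam Wpos unfolding a_def by (simp add: field_simps power2_eq_square)
  also have "(ft x0 - tinf) / (\<gamma> * W) \<le> 3 * (ft x0 - tinf) / (\<gamma> * real T)"
  proof -
    have "(ft x0 - tinf) / (\<gamma> * W) = (ft x0 - tinf) * 3 / (\<gamma> * (3 * W))"
      using gam Wpos by (simp add: field_simps)
    also have "\<dots> \<le> (ft x0 - tinf) * 3 / (\<gamma> * real T)"
      using d0 gam Tpos W3 by (intro divide_left_mono mult_left_mono mult_pos_pos) auto
    finally show ?thesis by (simp add: mult.commute)
  qed
  finally show ?thesis unfolding m_def E_def by (simp add: ennreal_leI)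
qed

end


lemma Lf_pos_lemma:
  fixes f :: "real^'n::finite \<Rightarrow> real"
  assumes smooth: "L_smooth Lf f" and bdd: "bdd_below (range f)"
    and gam: "0 < \<gamma>" and gle: "\<gamma> \<le> 1 / (Lf * P)"
  shows "Lf > 0"
proof (rule ccontr)
  assume "\<not> Lf > 0"
  then consider "Lf = 0" | "Lf < 0" by linarith
  then show False
  proof cases
    case 1 then show False using gam gle by simp
  next
    case 2
    obtain B where B: "\<And>x. B \<le> f x" using bdd unfolding bdd_below_def by auto
    obtain e :: "real^'n" where e: "norm e = 1" using vector_choose_size[of 1] by auto
    define g0 where "g0 = grad f 0"
    define v where "v = (if g0 \<bullet> e \<le> 0 then e else - e)"
    have nv: "norm v = 1" using e by (simp add: v_def)
    have gv: "g0 \<bullet> v \<le> 0" by (simp add: v_def)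
    define t where "t = sqrt (2 * (\<bar>f 0 - B\<bar> + 1) / (- Lf))"
    have arg: "0 \<le> 2 * (\<bar>f 0 - B\<bar> + 1) / (- Lf)"
      using 2 by (intro divide_nonneg_pos) auto
    have t0: "0 \<le> t" unfolding t_def using arg by simp
    have t2: "t^2 = 2 * (\<bar>f 0 - B\<bar> + 1) / (- Lf)" unfolding t_def using arg by simp
    have "f (0 + t *\<^sub>R v) \<le> f 0 + grad f 0 \<bullet> (t *\<^sub>R v) + Lf / 2 * (norm (t *\<^sub>R v))^2"
      using smooth unfolding L_smooth_def by blast
    also have "grad f 0 \<bullet> (t *\<^sub>R v) \<le> 0" using gv t0 by (simp add: g0_def mult_nonneg_nonpos)
    also have "(norm (t *\<^sub>R v))^2 = t^2" using nv t0 by simp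
    also have "Lf / 2 * t^2 = - (\<bar>f 0 - B\<bar> + 1)" unfolding t2 using 2 by (simp add: field_simps)
    finally have "f (t *\<^sub>R v) \<le> f 0 - (\<bar>f 0 - B\<bar> + 1)" by simp
    with B[of "t *\<^sub>R v"] show False by linarith
  qed
qed

theorem theorem3:
  fixes f :: "real ^ 'n::finite \<Rightarrow> real"
    and s x0 :: "real ^ 'n"
    and D :: "(real ^ 'n ^ 'n) measure"
    and Lf \<gamma> :: real and T :: nat
  assumes D_prob: "prob_space D"
    and D_sets: "sets D = sets borel"
    and ES_int: "integrable D (\<lambda>S. S)"
    and ES: "(\<integral>S. S \<partial>D) = mat 1"
    and ESS_int: "integrable D (\<lambda>S. transpose S ** S)"
    and smooth: "L_smooth Lf f"
    and bdd: "bdd_below (range f)"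
    and Lmax_fin: "\<exists>L. AE S in D. lambda_max (transpose S ** S) \<le> L"
    and T: "T \<ge> 1"
    and \<gamma>_pos: "0 < \<gamma>"
    and \<gamma>_le: "\<gamma> \<le> 1 / (Lf * sqrt (L_D D * L_S_max D * real T))"
  shows "Min ((\<lambda>t. \<integral>\<^sup>+ \<omega>. ennreal ((norm (grad (f_tilde D f s) (dsgd f s \<gamma> x0 \<omega> t)))\<^sup>2)
                 \<partial>(PiM UNIV (\<lambda>_::nat. D))) ` {..<T})
         \<le> ennreal (3 * (f_tilde D f s x0 - Inf (range (f_tilde D f s))) / (\<gamma> * real T)
                   + \<gamma> * Lf\<^sup>2 * L_D D * L_S_max D * (Inf (range (f_tilde D f s)) - Inf (range f)))"
proof -
  have Lfp: "Lf > 0" by (rule Lf_pos_lemma[OF smooth bdd \<gamma>_pos \<gamma>_le])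
  interpret dset f s D Lf
    by (rule dset.intro[OF D_prob D_sets smooth bdd Lmax_fin ESS_int Lfp])
  have aT: "\<gamma>^2 * (Lf * LD) * (Lf * Lm) * real T \<le> 1"
  proof -
    define P where "P = LD * Lm * real T"
    have P0: "0 \<le> P" unfolding P_def using LD_nonneg Lm_nonneg by simp
    have gle: "\<gamma> \<le> 1 / (Lf * sqrt P)" using \<gamma>_le by (simp add: P_def LD_def Lm_def)
    have sP: "sqrt P > 0"
    proof (rule ccontr)
      assume "\<not> sqrt P > 0"
      then have "sqrt P = 0" using P0 by simp
      then show False using gle \<gamma>_pos by simp
    qed
    have X: "Lf * sqrt P > 0" using Lfp sP by simp
    have "\<gamma> * (Lf * sqrt P) \<le> 1" using gle X by (simp add: field_simps)
    then have "(\<gamma> * (Lf * sqrt P))^2 \<le> 1^2" using \<gamma>_pos X by (intro power_mono) auto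
    then have "\<gamma>^2 * Lf^2 * P \<le> 1" using P0 by (simp add: power_mult_distrib)
    then show ?thesis unfolding P_def by (simp add: power2_eq_square mult_ac)
  qed
  have e1: "f_tilde D f s = ft" by (simp add: ft_def)
  have e2: "grad ft = G" by (simp add: G_eq)
  show ?thesis
    unfolding e1 e2 LD_def[symmetric] Lm_def[symmetric] tinf_def[symmetric] finf_def[symmetric]
    by (rule final_bound[OF \<gamma>_pos aT T])
qed


end
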